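(* Let $\mu$ satisfy Assumption A (see context), let $E$ be an atom of $\mu$, and let $(z_n)_{n\ge1}\subset\mathbb{C}^+$ be a sequence converging non-tangentially to $E$. Then $$\lim_{n}I_{\widehat\mu}(z_n)=\lim_n\frac{\int\frac{1}{|x-z_n|^2}\mu(dx)}{\big|\int\frac{1}{x-z_n}\mu(dx)\big|^2}-1=\frac{1}{\mu(\{E\})}-1.$$
   Context: Assumption A: $n_{\mathrm{ac}},n_{\mathrm{pp}},n^{\mathrm{out}}_{\mathrm{pp}}\ge1$ integers; $\mu$ is a compactly supported Borel probability measure on $\mathbb{R}$ whose singular part is supported on a finite set $\{x_1,\dots,x_{n_{\mathrm{pp}}}\}$, whose absolutely continuous part $\mu_{\mathrm{ac}}$ is supported on $n_{\mathrm{ac}}$ intervals $[E_j^-,E_j^+]$, with exactly $n^{\mathrm{out}}_{\mathrm{pp}}$ atoms outside $\mathrm{supp}(\mu_{\mathrm{ac}})$, no atom at the endpoints $E_j^\pm$, and density $\rho$ with $C_j^{-1}<\rho(x)/\big((x-E_j^-)^{t_j^-}(E_j^+-x)^{t_j^+}\big)<C_j$ a.e. on $[E_j^-,E_j^+]$ for some $-1<t_j^\pm<1$, $C_j\ge1$. $F_\mu=-1/m_\mu$ with $m_\mu(z)=\int\frac{1}{x-z}\mu(dx)$; $\widehat\mu$ is the finite Borel measure with $F_\mu(\omega)-\omega=-\int x\mu(dx)+\int\frac{1}{x-\omega}\widehat\mu(dx)$, $\omega\in\mathbb{C}^+$; $I_\nu(\omega)=\int\frac{1}{|x-\omega|^2}\nu(dx)$.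 A sequence $z_n\in\mathbb{C}^+$ converging to $E\in\mathbb{R}$ converges non-tangentially if $|(\mathrm{Re}\,z_n-E)/\mathrm{Im}\,z_n|\le C$ for some $C>0$ and all large $n$. *)

theory Defs
  imports "HOL-Probability.Probability"
begin

definition stieltjes :: "real measure \<Rightarrow> complex \<Rightarrow> complex" where
  "stieltjes \<mu> z = (\<integral>x. 1 / (complex_of_real x - z) \<partial>\<mu>)"

definition Ftrans :: "real measure \<Rightarrow> complex \<Rightarrow> complex" where
  "Ftrans \<mu> z = - 1 / stieltjes \<mu> z"

definition Ifun :: "real measure \<Rightarrow> complex \<Rightarrow> real" where
  "Ifun \<nu> w = (\<integral>x. 1 / (cmod (complex_of_real x - w))\<^sup>2 \<partial>\<nu>)"

definition is_hat_measure :: "real measure \<Rightarrow> real measure \<Rightarrow> bool" where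
  "is_hat_measure \<mu> \<nu> \<longleftrightarrow> sets \<nu> = sets borel \<and> finite_measure \<nu> \<and>
     (\<forall>w. Im w > 0 \<longrightarrow>
        Ftrans \<mu> w - w = - complex_of_real (\<integral>x. x \<partial>\<mu>)
                           + (\<integral>x. 1 / (complex_of_real x - w) \<partial>\<nu>))"

definition nontangential_conv :: "(nat \<Rightarrow> complex) \<Rightarrow> real \<Rightarrow> bool" where
  "nontangential_conv z E \<longleftrightarrow> (\<forall>n. Im (z n) > 0) \<and> z \<longlonglongrightarrow> complex_of_real E \<and>
     (\<exists>C>0. \<forall>\<^sub>F n in sequentially. \<bar>(Re (z n) - E) / Im (z n)\<bar> \<le> C)"

definition assumptionA ::
  "real measure \<Rightarrow> nat \<Rightarrow> nat \<Rightarrow> nat \<Rightarrow> (nat \<Rightarrow> real) \<Rightarrow> (nat \<Rightarrow> real) \<Rightarrow>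
   (nat \<Rightarrow> real) \<Rightarrow> (nat \<Rightarrow> real) \<Rightarrow> (real \<Rightarrow> real) \<Rightarrow>
   (nat \<Rightarrow> real) \<Rightarrow> (nat \<Rightarrow> real) \<Rightarrow> (nat \<Rightarrow> real) \<Rightarrow> bool" where
  "assumptionA \<mu> nac npp nout xs ws Em Ep \<rho> tm tp C \<longleftrightarrow>
     nac \<ge> 1 \<and> npp \<ge> 1 \<and> nout \<ge> 1 \<and>
     prob_space \<mu> \<and> sets \<mu> = sets borel \<and>
     \<comment> \<open>the a.c. support: nac disjoint compact intervals\<close>
     (\<forall>j<nac. Em j < Ep j) \<and> (\<forall>j. Suc j < nac \<longrightarrow> Ep j < Em (Suc j)) \<and>
     \<comment> \<open>the atoms: npp distinct points with positive mass\<close>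
     inj_on xs {..<npp} \<and> (\<forall>j<npp. ws j > 0) \<and>
     \<comment> \<open>the density\<close>
     \<rho> \<in> borel_measurable borel \<and> (\<forall>x. \<rho> x \<ge> 0) \<and>
     (\<forall>x. x \<notin> (\<Union>j<nac. {Em j..Ep j}) \<longrightarrow> \<rho> x = 0) \<and>
     (\<forall>A\<in>sets borel. emeasure \<mu> A =
        (\<integral>\<^sup>+x\<in>A. ennreal (\<rho> x) \<partial>lborel) + (\<Sum>j<npp. ennreal (ws j) * indicator A (xs j))) \<and>
     \<comment> \<open>exactly nout atoms outside supp(mu_ac), none at the endpoints\<close>
     card {j\<in>{..<npp}. xs j \<notin> (\<Union>k<nac. {Em k..Ep k})} = nout \<and>
     (\<forall>j<npp. \<forall>k<nac. xs j \<noteq> Em k \<and> xs j \<noteq> Ep k) \<and>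
     \<comment> \<open>power-law behaviour of the density near the edges\<close>
     (\<forall>j<nac. -1 < tm j \<and> tm j < 1 \<and> -1 < tp j \<and> tp j < 1 \<and> C j \<ge> 1 \<and>
        (AE x in lborel. x \<in> {Em j..Ep j} \<longrightarrow>
           inverse (C j) < \<rho> x / ((x - Em j) powr tm j * (Ep j - x) powr tp j) \<and>
           \<rho> x / ((x - Em j) powr tm j * (Ep j - x) powr tp j) < C j))"

end

theory Submission
  imports Defs
begin

lemma key:
  fixes M :: "real measure" and z :: "nat \<Rightarrow> complex" and K E :: real
  assumes P: "prob_space M" and S: "sets M = sets borel" and pos: "\<forall>n. Im (z n) > 0"
    and lim: "z \<longlonglongrightarrow> complex_of_real E" and nt: "\<forall>n. \<bar>Re (z n) - E\<bar> \<le> K * Im (z n)"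
  shows "(\<lambda>n. (complex_of_real E - z n) * stieltjes M (z n)) \<longlonglongrightarrow> complex_of_real (measure M {E})"
    and "(\<lambda>n. (cmod (complex_of_real E - z n))\<^sup>2 * Ifun M (z n)) \<longlonglongrightarrow> measure M {E}"
proof -
  interpret prob_space M by fact
  have sp: "space M = UNIV" using sets_eq_imp_space_eq[OF S] by simp
  have meas: "borel_measurable M = borel_measurable borel"
    by (rule measurable_cong_sets[OF S refl])
  have nz: "complex_of_real x - z n \<noteq> 0" for x n
    using pos[rule_format, of n] by (auto simp: complex_eq_iff)
  have imle: "Im (z n) \<le> cmod (complex_of_real x - z n)" for x n
    using abs_Im_le_cmod[of "complex_of_real x - z n"] by simp
  have dle: "cmod (complex_of_real E - z n) \<le> (K + 1) * Im (z n)" for n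
  proof -
    have "cmod (complex_of_real E - z n) \<le> \<bar>Re (complex_of_real E - z n)\<bar> + \<bar>Im (complex_of_real E - z n)\<bar>"
      by (rule cmod_le)
    also have "\<dots> = \<bar>Re (z n) - E\<bar> + Im (z n)" using pos[rule_format, of n] by simp
    also have "\<dots> \<le> (K + 1) * Im (z n)" using nt[rule_format, of n] by (simp add: algebra_simps)
    finally show ?thesis .
  qed
  have bnd: "cmod (complex_of_real E - z n) / cmod (complex_of_real x - z n) \<le> K + 1" for x n
  proof -
    have "cmod (complex_of_real E - z n) / cmod (complex_of_real x - z n) \<le> (K + 1) * Im (z n) / Im (z n)"
    proof (rule frac_le)
      show "0 \<le> (K + 1) * Im (z n)" using order_trans[OF norm_ge_zero dle[of n]] .
      show "cmod (complex_of_real E - z n) \<le> (K + 1) * Im (z n)" by (rule dle)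
      show "0 < Im (z n)" using pos by simp
      show "Im (z n) \<le> cmod (complex_of_real x - z n)" by (rule imle)
    qed
    then show ?thesis using pos[rule_format, of n] by simp
  qed
  have zE: "(\<lambda>n. complex_of_real E - z n) \<longlonglongrightarrow> 0"
    using tendsto_diff[OF tendsto_const[of "complex_of_real E"] lim] by simp
  show "(\<lambda>n. (complex_of_real E - z n) * stieltjes M (z n)) \<longlonglongrightarrow> complex_of_real (measure M {E})"
  proof -
    have eq: "(complex_of_real E - z n) * stieltjes M (z n) = (\<integral>x. (complex_of_real E - z n) * (1 / (complex_of_real x - z n)) \<partial>M)" for n
      unfolding stieltjes_def by (rule integral_mult_right_zero[symmetric])
    have "(\<lambda>n. (\<integral>x. (complex_of_real E - z n) * (1 / (complex_of_real x - z n)) \<partial>M)) \<longlonglongrightarrow> (\<integral>x. complex_of_real (indicator {E} x) \<partial>M)"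
    proof (rule integral_dominated_convergence[where w="\<lambda>_. K + 1"])
      show "(\<lambda>x. complex_of_real (indicator {E} x)) \<in> borel_measurable M" unfolding meas by measurable
      show "(\<lambda>x. (complex_of_real E - z n) * (1 / (complex_of_real x - z n))) \<in> borel_measurable M" for n
        unfolding meas by measurable
      show "integrable M (\<lambda>_. K + 1)" by simp
      show "AE x in M. (\<lambda>n. (complex_of_real E - z n) * (1 / (complex_of_real x - z n))) \<longlonglongrightarrow> complex_of_real (indicator {E} x)"
      proof (rule AE_I2)
        fix x
        show "(\<lambda>n. (complex_of_real E - z n) * (1 / (complex_of_real x - z n))) \<longlonglongrightarrow> complex_of_real (indicator {E} x)"
        proof (cases "x = E")
          case True
          then show ?thesis using nz by simp
        next
          case False
          have "(\<lambda>n. 1 / (complex_of_real x - z n)) \<longlonglongrightarrow> 1 / (complex_of_real x - complex_of_real E)"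
            using False by (intro tendsto_intros lim) auto
          from tendsto_mult[OF zE this] show ?thesis using False by simp
        qed
      qed
      show "AE x in M. norm ((complex_of_real E - z n) * (1 / (complex_of_real x - z n))) \<le> K + 1" for n
        using bnd by (auto simp: norm_mult norm_divide)
    qed
    then show ?thesis using eq sp by simp
  qed
  show "(\<lambda>n. (cmod (complex_of_real E - z n))\<^sup>2 * Ifun M (z n)) \<longlonglongrightarrow> measure M {E}"
  proof -
    have eq: "(cmod (complex_of_real E - z n))\<^sup>2 * Ifun M (z n) = (\<integral>x. (cmod (complex_of_real E - z n))\<^sup>2 * (1 / (cmod (complex_of_real x - z n))\<^sup>2) \<partial>M)" for n
      unfolding Ifun_def by (rule integral_mult_right_zero[symmetric])
    have "(\<lambda>n. (\<integral>x. (cmod (complex_of_real E - z n))\<^sup>2 * (1 / (cmod (complex_of_real x - z n))\<^sup>2) \<partial>M)) \<longlonglongrightarrow> (\<integral>x. indicator {E} x \<partial>M)"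
    proof (rule integral_dominated_convergence[where w="\<lambda>_. (K + 1)\<^sup>2"])
      show "(\<lambda>x. indicator {E} x :: real) \<in> borel_measurable M" unfolding meas by measurable
      show "(\<lambda>x. (cmod (complex_of_real E - z n))\<^sup>2 * (1 / (cmod (complex_of_real x - z n))\<^sup>2)) \<in> borel_measurable M" for n
        unfolding meas by measurable
      show "integrable M (\<lambda>_. (K + 1)\<^sup>2)" by simp
      show "AE x in M. (\<lambda>n. (cmod (complex_of_real E - z n))\<^sup>2 * (1 / (cmod (complex_of_real x - z n))\<^sup>2)) \<longlonglongrightarrow> indicator {E} x"
      proof (rule AE_I2)
        fix x
        show "(\<lambda>n. (cmod (complex_of_real E - z n))\<^sup>2 * (1 / (cmod (complex_of_real x - z n))\<^sup>2)) \<longlonglongrightarrow> indicator {E} x"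
        proof (cases "x = E")
          case True
          then show ?thesis using nz by simp
        next
          case False
          have "(\<lambda>n. 1 / (cmod (complex_of_real x - z n))\<^sup>2) \<longlonglongrightarrow> 1 / (cmod (complex_of_real x - complex_of_real E))\<^sup>2"
            using False by (intro tendsto_intros lim) auto
          moreover have "(\<lambda>n. (cmod (complex_of_real E - z n))\<^sup>2) \<longlonglongrightarrow> 0"
            using tendsto_power[OF tendsto_norm[OF zE], of 2] by simp
          ultimately show ?thesis using False tendsto_mult by fastforce
        qed
      qed
      show "AE x in M. norm ((cmod (complex_of_real E - z n))\<^sup>2 * (1 / (cmod (complex_of_real x - z n))\<^sup>2)) \<le> (K + 1)\<^sup>2" for n
      proof (rule AE_I2)
        fix x
        have "(cmod (complex_of_real E - z n))\<^sup>2 * (1 / (cmod (complex_of_real x - z n))\<^sup>2)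
            = (cmod (complex_of_real E - z n) / cmod (complex_of_real x - z n))\<^sup>2"
          by (simp add: power_divide)
        also have "\<dots> \<le> (K + 1)\<^sup>2" using bnd[of n x] by (intro power_mono) auto
        finally show "norm ((cmod (complex_of_real E - z n))\<^sup>2 * (1 / (cmod (complex_of_real x - z n))\<^sup>2)) \<le> (K + 1)\<^sup>2"
          by simp
      qed
    qed
    then show ?thesis using eq sp by simp
  qed
qed


lemma im_recip: "Im (1 / (complex_of_real x - w)) = Im w / (cmod (complex_of_real x - w))\<^sup>2"
  by (simp add: Im_divide cmod_power2)

lemma im_stj:
  fixes M :: "real measure"
  assumes F: "finite_measure M" and S: "sets M = sets borel" and w: "Im w > 0"
  shows "Im (\<integral>x. 1 / (complex_of_real x - w) \<partial>M) = Im w * Ifun M w"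
proof -
  interpret finite_measure M by fact
  have meas: "borel_measurable M = borel_measurable borel"
    by (rule measurable_cong_sets[OF S refl])
  have imle: "Im w \<le> cmod (complex_of_real x - w)" for x
    using abs_Im_le_cmod[of "complex_of_real x - w"] w by simp
  have int: "integrable M (\<lambda>x. 1 / (complex_of_real x - w))"
  proof (rule integrable_const_bound[where B="1 / Im w"])
    show "AE x in M. norm (1 / (complex_of_real x - w)) \<le> 1 / Im w"
    proof (rule AE_I2)
      fix x
      have "1 / cmod (complex_of_real x - w) \<le> 1 / Im w"
        using imle[of x] w by (intro frac_le) simp_all
      then show "norm (1 / (complex_of_real x - w)) \<le> 1 / Im w" by (simp add: norm_divide)
    qed
    show "(\<lambda>x. 1 / (complex_of_real x - w)) \<in> borel_measurable M" unfolding meas by measurable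
  qed
  have "Im (\<integral>x. 1 / (complex_of_real x - w) \<partial>M) = (\<integral>x. Im (1 / (complex_of_real x - w)) \<partial>M)"
    using int by simp
  also have "\<dots> = (\<integral>x. Im w * (1 / (cmod (complex_of_real x - w))\<^sup>2) \<partial>M)"
    by (rule Bochner_Integration.integral_cong) (simp_all only: im_recip, simp)
  also have "\<dots> = Im w * Ifun M w" unfolding Ifun_def by (rule integral_mult_right_zero)
  finally show ?thesis .
qed

lemma ident:
  assumes A: "prob_space \<mu>" "sets \<mu> = sets borel" and H: "is_hat_measure \<mu> \<nu>" and w: "Im w > 0"
  shows "Ifun \<nu> w = Ifun \<mu> w / (cmod (stieltjes \<mu> w))\<^sup>2 - 1"
proof -
  interpret prob_space \<mu> by (rule A(1))
  have fm: "finite_measure \<mu>" by (rule finite_measure_axioms)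
  have hS: "sets \<nu> = sets borel" "finite_measure \<nu>" using H unfolding is_hat_measure_def by auto
  have eq: "Ftrans \<mu> w - w = - complex_of_real (\<integral>x. x \<partial>\<mu>) + (\<integral>x. 1 / (complex_of_real x - w) \<partial>\<nu>)"
    using H w unfolding is_hat_measure_def by auto
  have "Im (Ftrans \<mu> w - w) = Im w * Ifun \<nu> w"
    using arg_cong[OF eq, of Im] im_stj[OF hS(2) hS(1) w] by simp
  moreover have "Im (Ftrans \<mu> w) = Im (stieltjes \<mu> w) / (cmod (stieltjes \<mu> w))\<^sup>2"
    unfolding Ftrans_def by (simp add: Im_divide cmod_power2)
  moreover have "Im (stieltjes \<mu> w) = Im w * Ifun \<mu> w"
    using im_stj[OF fm A(2) w] unfolding stieltjes_def .
  ultimately have "Im w * Ifun \<nu> w = Im w * (Ifun \<mu> w / (cmod (stieltjes \<mu> w))\<^sup>2 - 1)"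
    by (simp add: algebra_simps)
  then show ?thesis using w by simp
qed

theorem lemma3p11:
  fixes \<mu> \<nu> :: "real measure" and nac npp nout :: nat
    and xs ws Em Ep tm tp C :: "nat \<Rightarrow> real" and \<rho> :: "real \<Rightarrow> real"
    and E :: real and z :: "nat \<Rightarrow> complex"
  assumes "assumptionA \<mu> nac npp nout xs ws Em Ep \<rho> tm tp C"
    and "is_hat_measure \<mu> \<nu>"
    and "measure \<mu> {E} > 0"
    and "nontangential_conv z E"
  shows "((\<lambda>n. Ifun \<nu> (z n)) \<longlonglongrightarrow> 1 / measure \<mu> {E} - 1) \<and>
         ((\<lambda>n. Ifun \<mu> (z n) / (cmod (stieltjes \<mu> (z n)))\<^sup>2 - 1) \<longlonglongrightarrow> 1 / measure \<mu> {E} - 1)"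
proof -
  have P: "prob_space \<mu>" and S: "sets \<mu> = sets borel" using assms(1) unfolding assumptionA_def by auto
  define p where "p = measure \<mu> {E}"
  have pp: "p > 0" using assms(3) p_def by simp
  have pos: "\<forall>n. Im (z n) > 0" and lim: "z \<longlonglongrightarrow> complex_of_real E"
    using assms(4) unfolding nontangential_conv_def by auto
  obtain K where "K > 0" and ev: "\<forall>\<^sub>F n in sequentially. \<bar>(Re (z n) - E) / Im (z n)\<bar> \<le> K"
    using assms(4) unfolding nontangential_conv_def by auto
  from ev obtain N where N: "\<And>n. n \<ge> N \<Longrightarrow> \<bar>(Re (z n) - E) / Im (z n)\<bar> \<le> K"
    unfolding eventually_sequentially by blast
  define z' where "z' n = z (n + N)" for n
  have pos': "\<forall>n. Im (z' n) > 0" using pos by (simp add: z'_def)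
  have lim': "z' \<longlonglongrightarrow> complex_of_real E"
    unfolding z'_def using LIMSEQ_ignore_initial_segment[OF lim] .
  have nt': "\<forall>n. \<bar>Re (z' n) - E\<bar> \<le> K * Im (z' n)"
  proof
    fix n
    have "\<bar>(Re (z' n) - E) / Im (z' n)\<bar> \<le> K" using N[of "n + N"] by (simp add: z'_def)
    then show "\<bar>Re (z' n) - E\<bar> \<le> K * Im (z' n)" using pos'[rule_format, of n]
      by (simp add: abs_divide pos_divide_le_eq)
  qed
  note k1 = key(1)[OF P S pos' lim' nt'] and k2 = key(2)[OF P S pos' lim' nt']
  have dnz: "complex_of_real E - z' n \<noteq> 0" for n
    using pos'[rule_format, of n] by (auto simp: complex_eq_iff)
  have rw: "Ifun \<mu> (z' n) / (cmod (stieltjes \<mu> (z' n)))\<^sup>2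
      = (cmod (complex_of_real E - z' n))\<^sup>2 * Ifun \<mu> (z' n) / (cmod ((complex_of_real E - z' n) * stieltjes \<mu> (z' n)))\<^sup>2" for n
  proof -
    have "cmod (complex_of_real E - z' n) \<noteq> 0" using dnz[of n] by simp
    then have "(cmod (complex_of_real E - z' n))\<^sup>2 \<noteq> 0" by simp
    then show ?thesis unfolding norm_mult power_mult_distrib
      by (rule mult_divide_mult_cancel_left[symmetric])
  qed
  have T: "(\<lambda>n. (cmod (complex_of_real E - z' n))\<^sup>2 * Ifun \<mu> (z' n) / (cmod ((complex_of_real E - z' n) * stieltjes \<mu> (z' n)))\<^sup>2)
      \<longlonglongrightarrow> p / (cmod (complex_of_real p))\<^sup>2"
    using pp unfolding p_def by (intro tendsto_intros k1 k2) auto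
  have c: "p / (cmod (complex_of_real p))\<^sup>2 = 1 / p" using pp by (simp add: power2_eq_square)
  have fe: "(\<lambda>n. Ifun \<mu> (z' n) / (cmod (stieltjes \<mu> (z' n)))\<^sup>2) = (\<lambda>n. (cmod (complex_of_real E - z' n))\<^sup>2 * Ifun \<mu> (z' n) / (cmod ((complex_of_real E - z' n) * stieltjes \<mu> (z' n)))\<^sup>2)"
    by (intro ext rw)
  have "(\<lambda>n. Ifun \<mu> (z' n) / (cmod (stieltjes \<mu> (z' n)))\<^sup>2) \<longlonglongrightarrow> 1 / p"
    using T unfolding fe c .
  then have "(\<lambda>n. Ifun \<mu> (z (n + N)) / (cmod (stieltjes \<mu> (z (n + N))))\<^sup>2) \<longlonglongrightarrow> 1 / p"
    unfolding z'_def .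
  then have "(\<lambda>n. Ifun \<mu> (z n) / (cmod (stieltjes \<mu> (z n)))\<^sup>2) \<longlonglongrightarrow> 1 / p"
    by (rule LIMSEQ_offset)
  then have L: "(\<lambda>n. Ifun \<mu> (z n) / (cmod (stieltjes \<mu> (z n)))\<^sup>2 - 1) \<longlonglongrightarrow> 1 / p - 1"
    by (rule tendsto_diff[OF _ tendsto_const])
  have "Ifun \<nu> (z n) = Ifun \<mu> (z n) / (cmod (stieltjes \<mu> (z n)))\<^sup>2 - 1" for n
    using ident[OF P S assms(2) pos[rule_format, of n]] .
  then have fe2: "(\<lambda>n. Ifun \<nu> (z n)) = (\<lambda>n. Ifun \<mu> (z n) / (cmod (stieltjes \<mu> (z n)))\<^sup>2 - 1)"
    by (intro ext)
  show ?thesis unfolding p_def[symmetric] fe2 using L by (intro conjI)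
qed

end
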